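(* Let $\Lambda$ be a finite connected graph with $N$ vertices (sites), let $\mathfrak{h}$ be a finite-dimensional Hilbert space, and let $\mathcal{H}=\bigotimes_{x\in\Lambda}\mathfrak{h}_x$ with each $\mathfrak{h}_x$ a copy of $\mathfrak{h}$. Let $\mathfrak{h}^s\subset\mathfrak{h}$ be a subspace, $\mathfrak{h}^s_x\subset\mathfrak{h}_x$ its copy at site $x$, and let $\mathrm{Sym}^N(\mathfrak{h}^s)\subset\bigotimes_{x\in\Lambda}\mathfrak{h}^s_x\subset\mathcal{H}$ be the totally symmetric subspace. If a linear operator $\hat{O}$ on $\mathcal{H}$ satisfies $\hat{O}v=0$ for all $v\in\mathrm{Sym}^N(\mathfrak{h}^s)$, then $\hat{O}$ can be written as $$\hat{O}=\sum_{x\in\Lambda}\hat{o}^{(1)}_{[x]}\hat{P}_x+\sum_{\langle x,y\rangle}\hat{o}^{(2)}_{[xy]}\hat{P}_{xy},$$ where the second sum runs over pairs of nearest-neighbour (adjacent) sites, each $\hat{P}_x$ is an orthogonal projector acting non-trivially only on site $x$, each $\hat{P}_{xy}$ is an orthogonal projector acting non-trivially only on the pair of sites $x,y$, every $\hat{P}_x$ and $\hat{P}_{xy}$ annihilates $\mathrm{Sym}^N(\mathfrak{h}^s)$, and $\hat{o}^{(1)}_{[x]},\hat{o}^{(2)}_{[xy]}$ are some linear operators on $\mathcal{H}$ (not required to be local).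
   Context: For a permutation $\sigma\in\mathfrak{S}_N$ of the sites, $\hat{\sigma}$ denotes the operator on $\mathcal{H}$ permuting tensor factors: $\hat{\sigma}\bigotimes_{x}|e_x\rangle_x=\bigotimes_x|e_{\sigma(x)}\rangle_x$. The totally symmetric subspace is $\mathrm{Sym}^N(\mathfrak{h}^s)=\{v\in\bigotimes_{x\in\Lambda}\mathfrak{h}^s_x:\hat{\sigma}v=v\ \forall\sigma\in\mathfrak{S}_N\}$, viewed as a subspace of $\mathcal{H}$. An operator "annihilates" a subspace if it maps every vector of it to $0$. *)

theory Defs
  imports Complex_Main
begin

text \<open>Model: the single-site Hilbert space h is identified (via an orthonormal basis indexed by
the finite type 'b) with functions 'b \<Rightarrow> complex with the standard inner product.
The total space H is identified with functions ('v \<Rightarrow> 'b) \<Rightarrow> complex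
(coefficients with respect to the product basis indexed by configurations c : 'v \<Rightarrow> 'b).\<close>

definition op_apply :: "(('v \<Rightarrow> 'b) \<Rightarrow> ('v \<Rightarrow> 'b) \<Rightarrow> complex) \<Rightarrow> (('v \<Rightarrow> 'b) \<Rightarrow> complex) \<Rightarrow> (('v \<Rightarrow> 'b) \<Rightarrow> complex)"
  where "op_apply A u = (\<lambda>c. \<Sum>c'\<in>UNIV. A c c' * u c')"

definition op_mult :: "(('v \<Rightarrow> 'b) \<Rightarrow> ('v \<Rightarrow> 'b) \<Rightarrow> complex) \<Rightarrow> (('v \<Rightarrow> 'b) \<Rightarrow> ('v \<Rightarrow> 'b) \<Rightarrow> complex) \<Rightarrow> (('v \<Rightarrow> 'b) \<Rightarrow> ('v \<Rightarrow> 'b) \<Rightarrow> complex)"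
  where "op_mult A B = (\<lambda>c c''. \<Sum>c'\<in>UNIV. A c c' * B c' c'')"

definition is_orth_proj :: "(('v \<Rightarrow> 'b) \<Rightarrow> ('v \<Rightarrow> 'b) \<Rightarrow> complex) \<Rightarrow> bool"
  where "is_orth_proj P \<longleftrightarrow> op_mult P P = P \<and> (\<forall>c c'. P c' c = cnj (P c c'))"

text \<open>P acts non-trivially only on the sites in S, i.e. P = A \<otimes> Id on the complement of S.\<close>
definition acts_only_on :: "'v set \<Rightarrow> (('v \<Rightarrow> 'b) \<Rightarrow> ('v \<Rightarrow> 'b) \<Rightarrow> complex) \<Rightarrow> bool"
  where "acts_only_on S P \<longleftrightarrow>
     (\<forall>c c'. (\<exists>z. z \<notin> S \<and> c z \<noteq> c' z) \<longrightarrow> P c c' = 0) \<and>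
     (\<forall>c c' d d'. (\<forall>z\<in>S. c z = d z \<and> c' z = d' z) \<longrightarrow>
         (\<forall>z. z \<notin> S \<longrightarrow> c z = c' z) \<longrightarrow> (\<forall>z. z \<notin> S \<longrightarrow> d z = d' z) \<longrightarrow>
         P c c' = P d d')"

definition csubspace :: "('b \<Rightarrow> complex) set \<Rightarrow> bool"
  where "csubspace V \<longleftrightarrow> (\<lambda>i. 0) \<in> V \<and> (\<forall>u\<in>V. \<forall>w\<in>V. (\<lambda>i. u i + w i) \<in> V)
                         \<and> (\<forall>a::complex. \<forall>u\<in>V. (\<lambda>i. a * u i) \<in> V)"

text \<open>The tensor product of the site copies of V inside H: the complex span of product vectors.\<close>
definition tensor_sub :: "('b \<Rightarrow> complex) set \<Rightarrow> (('v::finite \<Rightarrow> 'b) \<Rightarrow> complex) set"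
  where "tensor_sub V = {u. \<exists>(n::nat) (a::nat \<Rightarrow> complex) (vs :: nat \<Rightarrow> 'v \<Rightarrow> 'b \<Rightarrow> complex).
            (\<forall>k<n. \<forall>x. vs k x \<in> V) \<and>
            u = (\<lambda>c. \<Sum>k<n. a k * (\<Prod>x\<in>UNIV. vs k x (c x)))}"

text \<open>The site permutation operator: sends the basis vector c to c \<circ> \<sigma>.\<close>
definition perm_op :: "('v \<Rightarrow> 'v) \<Rightarrow> (('v \<Rightarrow> 'b) \<Rightarrow> complex) \<Rightarrow> (('v \<Rightarrow> 'b) \<Rightarrow> complex)"
  where "perm_op \<sigma> u = (\<lambda>d. u (d \<circ> inv \<sigma>))"

definition sym_sub :: "('b \<Rightarrow> complex) set \<Rightarrow> (('v::finite \<Rightarrow> 'b) \<Rightarrow> complex) set"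
  where "sym_sub V = {u \<in> tensor_sub V. \<forall>\<sigma>. bij \<sigma> \<longrightarrow> perm_op \<sigma> u = u}"

definition annihilates :: "(('v \<Rightarrow> 'b) \<Rightarrow> ('v \<Rightarrow> 'b) \<Rightarrow> complex) \<Rightarrow> (('v \<Rightarrow> 'b) \<Rightarrow> complex) set \<Rightarrow> bool"
  where "annihilates A W \<longleftrightarrow> (\<forall>u\<in>W. op_apply A u = (\<lambda>c. 0))"

definition edges :: "('v \<Rightarrow> 'v \<Rightarrow> bool) \<Rightarrow> 'v set set"
  where "edges E = {{x, y} | x y. E x y}"

definition connected_graph :: "('v \<Rightarrow> 'v \<Rightarrow> bool) \<Rightarrow> bool"
  where "connected_graph E \<longleftrightarrow> (\<forall>x y. (x, y) \<in> {(a, b). E a b}\<^sup>*)"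

end

theory Submission
  imports Defs "HOL-Library.Function_Algebras" "HOL-Combinatorics.Permutations"
begin

definition sc :: "complex \<Rightarrow> ('i \<Rightarrow> complex) \<Rightarrow> ('i \<Rightarrow> complex)"
  where "sc a u = (\<lambda>i. a * u i)"

lemma module_sc: "module (sc :: complex \<Rightarrow> ('i \<Rightarrow> complex) \<Rightarrow> _)"
  by unfold_locales (auto simp: sc_def fun_eq_iff algebra_simps)

interpretation vs: vector_space "sc :: complex \<Rightarrow> ('i \<Rightarrow> complex) \<Rightarrow> _"
  by unfold_locales (auto simp: sc_def fun_eq_iff algebra_simps)

interpretation vsp: vector_space_pair "sc :: complex \<Rightarrow> ('i \<Rightarrow> complex) \<Rightarrow> _" "sc :: complex \<Rightarrow> ('j \<Rightarrow> complex) \<Rightarrow> _"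
  by unfold_locales

definition mv :: "('i \<Rightarrow> 'i \<Rightarrow> complex) \<Rightarrow> ('i \<Rightarrow> complex) \<Rightarrow> ('i \<Rightarrow> complex)"
  where "mv A u = (\<lambda>i. \<Sum>j\<in>UNIV. A i j * u j)"

definition mm :: "('i \<Rightarrow> 'i \<Rightarrow> complex) \<Rightarrow> ('i \<Rightarrow> 'i \<Rightarrow> complex) \<Rightarrow> ('i \<Rightarrow> 'i \<Rightarrow> complex)"
  where "mm A B = (\<lambda>i k. \<Sum>j\<in>UNIV. A i j * B j k)"

lemma op_apply_mv: "op_apply = mv" by (simp add: op_apply_def mv_def fun_eq_iff)
lemma op_mult_mm: "op_mult = mm" by (simp add: op_mult_def mm_def fun_eq_iff)

lemma mv_mm: "mv (mm A B) u = mv A (mv (B :: 'i::finite \<Rightarrow> _) u)"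
proof -
  have "(\<Sum>j\<in>UNIV. (\<Sum>k\<in>UNIV. A i k * B k j) * u j) = (\<Sum>k\<in>UNIV. A i k * (\<Sum>j\<in>UNIV. B k j * u j))" for i
    by (simp add: sum_distrib_left sum_distrib_right mult.assoc) (rule sum.swap)
  thus ?thesis by (simp add: mv_def mm_def fun_eq_iff)
qed

lemma linear_mv: "Vector_Spaces.linear sc sc (mv (A::'i::finite \<Rightarrow> _))"
  unfolding module_hom_iff_linear[symmetric]
  by (auto simp: module_hom_def module_hom_axioms_def module_sc
      mv_def sc_def fun_eq_iff algebra_simps sum.distrib sum_distrib_left)

lemma lin_hom: "Vector_Spaces.linear sc sc f \<Longrightarrow> module_hom sc sc f"
  by (simp add: module_hom_iff_linear)

lemma sum_fun_apply: "(sum f S) x = (\<Sum>s\<in>S. f s x)"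
  by (induction S rule: infinite_finite_induct) auto

definition dl :: "'i \<Rightarrow> 'i \<Rightarrow> complex" where "dl j = (\<lambda>i. if i = j then 1 else 0)"

lemma expand_dl: "(w :: 'i::finite \<Rightarrow> complex) = (\<Sum>j\<in>UNIV. sc (w j) (dl j))"
  by (simp add: fun_eq_iff sum_fun_apply sc_def dl_def if_distrib cong: if_cong)

lemma factor:
  fixes G A :: "'i::finite \<Rightarrow> 'i \<Rightarrow> complex"
  assumes "\<And>u. mv G u = 0 \<Longrightarrow> mv A u = 0"
  shows "\<exists>X. A = mm X G"
proof -
  obtain g where g: "Vector_Spaces.linear sc sc g" "\<forall>v\<in>range (mv G). mv G (g v) = v"
    using vsp.linear_exists_right_inverse_on[OF linear_mv vs.subspace_UNIV, of G] by blast
  define X where "X = (\<lambda>i j. mv A (g (dl j)) i)"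
  have lin: "Vector_Spaces.linear sc sc (\<lambda>v. mv A (g v))"
    using g(1) linear_mv by (rule Vector_Spaces.linear_compose[unfolded o_def])
  show ?thesis
  proof (intro exI ext)
    fix i k
    define w where "w = mv G (dl k)"
    have wk: "w j = G j k" for j by (simp add: w_def mv_def dl_def if_distrib cong: if_cong)
    have "mm X G i k = (\<Sum>j\<in>UNIV. mv A (g (dl j)) i * w j)" by (simp add: mm_def X_def wk)
    also have "\<dots> = mv A (g (\<Sum>j\<in>UNIV. sc (w j) (dl j))) i"
    proof -
      have "mv A (g (\<Sum>j\<in>UNIV. sc (w j) (dl j))) = (\<Sum>j\<in>UNIV. sc (w j) (mv A (g (dl j))))"
        unfolding module_hom.sum[OF lin_hom[OF lin]] module_hom.scale[OF lin_hom[OF lin]] ..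
      thus ?thesis by (simp add: sum_fun_apply sc_def mult.commute)
    qed
    also have "\<dots> = mv A (g w) i" by (simp flip: expand_dl)
    also have "mv A (g w) = mv A (dl k)"
    proof -
      have "mv G (g w) = w" using g(2) w_def by auto
      moreover have "mv G (g w - dl k) = mv G (g w) - mv G (dl k)"
        by (rule module_hom.diff[OF lin_hom[OF linear_mv]])
      ultimately have "mv G (g w - dl k) = 0" using w_def by simp
      hence "mv A (g w - dl k) = 0" by (rule assms)
      moreover have "mv A (g w - dl k) = mv A (g w) - mv A (dl k)"
        by (rule module_hom.diff[OF lin_hom[OF linear_mv]])
      ultimately show ?thesis by simp
    qed
    also have "mv A (dl k) i = A i k" by (simp add: mv_def dl_def if_distrib cong: if_cong)
    finally show "A i k = mm X G i k" by simp
  qed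
qed

definition herm :: "('i \<Rightarrow> 'i \<Rightarrow> complex) \<Rightarrow> bool" where "herm A \<longleftrightarrow> (\<forall>i j. A j i = cnj (A i j))"

definition ip :: "('i \<Rightarrow> complex) \<Rightarrow> ('i \<Rightarrow> complex) \<Rightarrow> complex"
  where "ip x y = (\<Sum>c\<in>UNIV. cnj (x c) * y c)"

lemma mv_ext: "(\<And>v. mv A v = mv B (v::'i::finite \<Rightarrow> complex)) \<Longrightarrow> A = B"
proof (intro ext)
  fix i k assume "\<And>v. mv A v = mv B (v::'i::finite \<Rightarrow> complex)"
  from this[of "dl k"] have "mv A (dl k) i = mv B (dl k) i" by simp
  thus "A i k = B i k" by (simp add: mv_def dl_def if_distrib cong: if_cong)
qed

lemma mv_add: "mv A (x + y) = mv A x + mv A y"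
  by (simp add: mv_def fun_eq_iff algebra_simps sum.distrib)
lemma mv_sc: "mv A (sc a x) = sc a (mv A x)"
  by (simp add: mv_def fun_eq_iff algebra_simps sc_def sum_distrib_left)
lemma mv_diff: "mv A (x - y) = mv A x - mv A y"
  by (simp add: mv_def fun_eq_iff algebra_simps sum_subtractf)
lemma mv_zero: "mv A 0 = 0"
  by (simp add: mv_def fun_eq_iff)
lemma ip_add: "ip r (x + y) = ip r x + ip r y"
  by (simp add: ip_def algebra_simps sum.distrib)
lemma ip_sc: "ip r (sc a x) = a * ip r x"
  by (simp add: ip_def algebra_simps sc_def sum_distrib_left)
lemma ip_diff: "ip r (x - y) = ip r x - ip r y"
  by (simp add: ip_def algebra_simps sum_subtractf)

lemma ip_herm: assumes "herm Q" shows "ip x (mv Q y) = ip (mv Q x) (y::'i::finite \<Rightarrow> complex)"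
proof -
  have "ip x (mv Q y) = (\<Sum>c\<in>UNIV. \<Sum>d\<in>UNIV. cnj (x c) * Q c d * y d)"
    by (simp add: ip_def mv_def sum_distrib_left mult.assoc)
  also have "\<dots> = (\<Sum>d\<in>UNIV. \<Sum>c\<in>UNIV. cnj (x c) * Q c d * y d)" by (rule sum.swap)
  also have "\<dots> = ip (mv Q x) y"
    unfolding ip_def mv_def sum_distrib_right cnj_sum
  proof (rule sum.cong[OF refl], rule sum.cong[OF refl])
    fix d c
    have "Q c d = cnj (Q d c)" using assms unfolding herm_def by blast
    thus "cnj (x c) * Q c d * y d = cnj (Q d c * x c) * y d" by simp
  qed
  finally show ?thesis .
qed

lemma ip_self_real: "ip r r = of_real (\<Sum>c\<in>UNIV. (cmod (r c))\<^sup>2)"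
proof -
  have "ip r r = (\<Sum>c\<in>UNIV. of_real ((cmod (r c))\<^sup>2))"
    unfolding ip_def by (rule sum.cong) (simp_all only: complex_norm_square mult.commute)
  thus ?thesis by (simp only: of_real_sum)
qed

lemma ip_self_nz: assumes "r \<noteq> (0::'i::finite \<Rightarrow> complex)" shows "ip r r \<noteq> 0"
proof -
  from assms obtain c where c: "r c \<noteq> 0" by (auto simp: fun_eq_iff)
  have "(\<Sum>c\<in>UNIV. (cmod (r c))\<^sup>2) > 0"
    by (rule sum_pos2[of UNIV c]) (use c in auto)
  thus ?thesis unfolding ip_self_real of_real_eq_0_iff by simp
qed

lemma proj_span:
  fixes B :: "('i::finite \<Rightarrow> complex) set"
  assumes "finite B"
  shows "\<exists>Q. mm Q Q = Q \<and> herm Q \<and> (\<forall>v\<in>B. mv Q v = v) \<and> (\<forall>v. mv Q v \<in> vs.span B)"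
  using assms
proof (induction B rule: finite_induct)
  case empty
  show ?case by (intro exI[of _ "\<lambda>i j. 0"]) (auto simp: mm_def mv_def herm_def vs.span_zero[unfolded zero_fun_def])
next
  case (insert w B)
  then obtain Q where Q: "mm Q Q = Q" "herm Q" "\<forall>v\<in>B. mv Q v = v" "\<forall>v. mv Q v \<in> vs.span B" by blast
  have QQ: "mv Q (mv Q v) = mv Q v" for v using Q(1) mv_mm by metis
  define r where "r = w - mv Q w"
  have Qr: "mv Q r = 0" by (simp add: r_def mv_diff QQ)
  have rQ: "ip r (mv Q y) = 0" for y using ip_herm[OF Q(2), of r y] Qr by (simp add: ip_def)
  have spmono: "vs.span B \<subseteq> vs.span (insert w B)" by (rule vs.span_mono) auto
  show ?case
  proof (cases "r = 0")
    case True
    hence "w = mv Q w" unfolding r_def by (rule right_minus_eq[THEN iffD1])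
    hence "w \<in> vs.span B" using Q(4) by metis
    hence "vs.span (insert w B) = vs.span B" by (rule vs.span_redundant)
    moreover have "mv Q w = w" using \<open>w = mv Q w\<close> by (rule sym)
    ultimately show ?thesis using Q by (intro exI[of _ Q]) auto
  next
    case False
    define nn where "nn = ip r r"
    have nn: "nn \<noteq> 0" using ip_self_nz[OF False] nn_def by simp
    define Q' where "Q' = (\<lambda>a b. Q a b + r a * cnj (r b) / nn)"
    have mvQ': "mv Q' v = mv Q v + sc (ip r v / nn) r" for v
      by (simp add: Q'_def mv_def ip_def sc_def fun_eq_iff algebra_simps sum.distrib sum_distrib_left sum_divide_distrib)
    have fixQ: "mv Q' v = v" if "mv Q v = v" for v
    proof -
      have "ip r v = 0" using rQ[of v] that by simp
      thus ?thesis using that by (simp add: mvQ' sc_def zero_fun_def[symmetric])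
    qed
    show ?thesis
    proof (intro exI[of _ Q'] conjI ballI allI)
      show "mm Q' Q' = Q'"
      proof (rule mv_ext)
        fix v
        have "mv Q' (mv Q' v) = mv Q' v"
          apply (simp only: mvQ' mv_add mv_sc Qr QQ ip_add ip_sc rQ nn_def[symmetric] add.assoc)
          using nn by (simp add: sc_def fun_eq_iff)
        thus "mv (mm Q' Q') v = mv Q' v" by (simp add: mv_mm)
      qed
      have cnn: "cnj nn = nn" unfolding nn_def ip_self_real by simp
      show "herm Q'" unfolding herm_def
      proof (intro allI)
        fix i j
        have "Q j i = cnj (Q i j)" using Q(2) unfolding herm_def by blast
        thus "Q' j i = cnj (Q' i j)" unfolding Q'_def by (simp add: cnn mult.commute)
      qed
      fix v
      show "v \<in> insert w B \<Longrightarrow> mv Q' v = v"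
      proof -
        assume "v \<in> insert w B"
        moreover have "mv Q' w = w"
        proof -
          have "ip r w = nn" unfolding nn_def
            using rQ[of w] by (simp add: r_def ip_diff)
          thus ?thesis using nn by (simp add: mvQ' sc_def r_def fun_eq_iff)
        qed
        ultimately show ?thesis using fixQ Q(3) by auto
      qed
      have a1: "mv Q u \<in> vs.span (insert w B)" for u using Q(4) spmono by blast
      have a2: "w \<in> vs.span (insert w B)" by (rule vs.span_base) simp
      have "r \<in> vs.span (insert w B)" unfolding r_def
        by (rule vs.span_diff[OF a2 a1])
      thus "mv Q' v \<in> vs.span (insert w B)" unfolding mvQ'
        by (intro vs.span_add[OF a1] vs.span_scale)
    qed
  qed
qed

lemma csub_vs: "csubspace hs \<Longrightarrow> vs.subspace hs"
  unfolding csubspace_def vs.subspace_def by (auto simp: zero_fun_def plus_fun_def sc_def)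

lemma csub_sum:
  assumes "csubspace hs" "finite K" "\<And>k. k \<in> K \<Longrightarrow> f k \<in> hs" shows "(\<lambda>i. \<Sum>k\<in>K. f k i) \<in> hs"
  using assms(2,3) proof (induction K rule: finite_induct)
  case empty thus ?case using assms(1) by (simp add: csubspace_def)
next
  case (insert k K)
  have a: "(\<lambda>i. \<Sum>k\<in>K. f k i) \<in> hs" and b: "f k \<in> hs" using insert by auto
  have H: "\<forall>u\<in>hs. \<forall>w\<in>hs. (\<lambda>i. u i + w i) \<in> hs" using assms(1) unfolding csubspace_def by blast
  have "(\<lambda>i. f k i + (\<lambda>i. \<Sum>k\<in>K. f k i) i) \<in> hs" using H[rule_format, OF b a] .
  hence "(\<lambda>i. f k i + (\<Sum>k\<in>K. f k i)) \<in> hs" by simp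
  thus ?case using insert by simp
qed

lemma csub_scale: "csubspace hs \<Longrightarrow> v \<in> hs \<Longrightarrow> (\<lambda>i. a * v i) \<in> hs"
  unfolding csubspace_def by blast

lemma hs_proj:
  fixes hs :: "('b::finite \<Rightarrow> complex) set"
  assumes "csubspace hs"
  shows "\<exists>Q. mm Q Q = Q \<and> herm Q \<and> (\<forall>v\<in>hs. mv Q v = v) \<and> (\<forall>v. mv Q v \<in> hs)"
proof -
  have sub: "vs.subspace hs" using csub_vs[OF assms] .
  obtain B where B: "B \<subseteq> hs" "vs.independent B" "hs \<subseteq> vs.span B"
    by (rule vs.maximal_independent_subset)
  have "UNIV \<subseteq> vs.span (range (dl :: 'b \<Rightarrow> _))"
  proof
    fix w :: "'b \<Rightarrow> complex"
    have "(\<Sum>j\<in>UNIV. sc (w j) (dl j)) \<in> vs.span (range dl)"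
      by (intro vs.span_sum vs.span_scale vs.span_base) auto
    thus "w \<in> vs.span (range dl)" by (simp flip: expand_dl)
  qed
  hence "B \<subseteq> vs.span (range dl)" by blast
  hence "finite B" using vs.independent_span_bound[OF _ B(2), of "range dl"] by simp
  then obtain Q where Q: "mm Q Q = Q" "herm Q" "\<forall>v\<in>B. mv Q v = v" "\<forall>v. mv Q v \<in> vs.span B"
    using proj_span by blast
  have spB: "vs.span B = hs" using B sub vs.span_minimal by (metis antisym)
  have "mv Q v = v" if "v \<in> hs" for v
  proof -
    have "vs.subspace {v. mv Q v = v}"
      unfolding vs.subspace_def by (simp add: mv_add mv_sc mv_zero)
    thus ?thesis using vs.span_subspace_induct[of v B "{v. mv Q v = v}"] that spB Q(3) by auto
  qed
  thus ?thesis using Q spB by auto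
qed

lemma sum_site:
  fixes f :: "('v::finite \<Rightarrow> 'b::finite) \<Rightarrow> complex"
  shows "(\<Sum>c'\<in>UNIV. if (\<forall>z. z \<noteq> x \<longrightarrow> c z = c' z) then f c' else 0) = (\<Sum>b\<in>UNIV. f (c(x:=b)))"
proof -
  have S: "{c'. \<forall>z. z \<noteq> x \<longrightarrow> c z = c' z} = range (\<lambda>b. c(x:=b))"
  proof (intro set_eqI iffI)
    fix c' assume "c' \<in> {c'. \<forall>z. z \<noteq> x \<longrightarrow> c z = c' z}"
    hence "c' = c(x := c' x)" by (auto simp: fun_eq_iff)
    thus "c' \<in> range (\<lambda>b. c(x:=b))" by blast
  qed auto
  have inj: "inj (\<lambda>b. c(x:=b))" by (rule injI) (metis fun_upd_same)
  have "(\<Sum>c'\<in>UNIV. if (\<forall>z. z \<noteq> x \<longrightarrow> c z = c' z) then f c' else 0) = sum f {c'. \<forall>z. z \<noteq> x \<longrightarrow> c z = c' z}"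
    by (simp add: sum.If_cases)
  also have "\<dots> = (\<Sum>b\<in>UNIV. f (c(x:=b)))" unfolding S by (simp add: sum.reindex[OF inj])
  finally show ?thesis .
qed

definition P1 :: "('b \<Rightarrow> 'b \<Rightarrow> complex) \<Rightarrow> 'v \<Rightarrow> ('v \<Rightarrow> 'b) \<Rightarrow> ('v \<Rightarrow> 'b) \<Rightarrow> complex"
  where "P1 R x c c' = (if (\<forall>z. z \<noteq> x \<longrightarrow> c z = c' z) then R (c x) (c' x) else 0)"

definition slice :: "(('v \<Rightarrow> 'b) \<Rightarrow> complex) \<Rightarrow> ('v \<Rightarrow> 'b) \<Rightarrow> 'v \<Rightarrow> 'b \<Rightarrow> complex"
  where "slice u c x = (\<lambda>b. u (c(x:=b)))"

lemma mv_P1: "mv (P1 R x) u c = mv R (slice u c x) (c (x::'v::finite) :: 'b::finite)"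
proof -
  have "mv (P1 R x) u c = (\<Sum>c'\<in>UNIV. if (\<forall>z. z \<noteq> x \<longrightarrow> c z = c' z) then R (c x) (c' x) * u c' else 0)"
    unfolding mv_def P1_def by (rule sum.cong) auto
  also have "\<dots> = mv R (slice u c x) (c x)" unfolding sum_site by (simp add: mv_def slice_def)
  finally show ?thesis .
qed

lemma P1_proj:
  fixes R :: "'b::finite \<Rightarrow> 'b \<Rightarrow> complex"
  assumes "mm R R = R" "herm R"
  shows "is_orth_proj (P1 R (x::'v::finite))"
  unfolding is_orth_proj_def op_mult_mm
proof (intro conjI allI)
  show "mm (P1 R x) (P1 R x) = P1 R x"
  proof (rule mv_ext)
    fix u
    show "mv (mm (P1 R x) (P1 R x)) u = mv (P1 R x) u"
    proof
      fix c
      have "slice (mv (P1 R x) u) c x = mv R (slice u c x)"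
        by (simp add: fun_eq_iff slice_def mv_P1)
      thus "mv (mm (P1 R x) (P1 R x)) u c = mv (P1 R x) u c"
        by (simp add: mv_mm mv_P1 assms(1) flip: mv_mm[of R R])
    qed
  qed
  fix c c'
  show "P1 R x c' c = cnj (P1 R x c c')"
  proof -
    have "R (c' x) (c x) = cnj (R (c x) (c' x))" using assms(2) unfolding herm_def by blast
    moreover have "(\<forall>z. z \<noteq> x \<longrightarrow> c' z = c z) = (\<forall>z. z \<noteq> x \<longrightarrow> c z = c' z)" by metis
    ultimately show ?thesis unfolding P1_def by (simp; blast)
  qed
qed

lemma P1_local: "acts_only_on {x} (P1 R x)"
  unfolding acts_only_on_def P1_def by auto

lemma P1_ann:
  fixes R :: "'b::finite \<Rightarrow> 'b \<Rightarrow> complex"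
  assumes sub: "csubspace hs" and R0: "\<forall>v\<in>hs. mv R v = 0"
  shows "annihilates (P1 R (x::'v::finite)) (sym_sub hs)"
  unfolding annihilates_def op_apply_mv
proof
  fix u :: "('v \<Rightarrow> 'b) \<Rightarrow> complex" assume "u \<in> sym_sub hs"
  hence "u \<in> tensor_sub hs" by (simp add: sym_sub_def)
  hence "\<exists>(n::nat) (a::nat \<Rightarrow> complex) vs. (\<forall>k<n. \<forall>x. vs k x \<in> hs) \<and> u = (\<lambda>c. \<Sum>k<n. a k * (\<Prod>x\<in>UNIV. vs k x (c x)))"
    unfolding tensor_sub_def by simp
  then obtain n :: nat and a :: "nat \<Rightarrow> complex" and vs where V: "\<forall>k<n. \<forall>x. vs k x \<in> hs"
    and u: "u = (\<lambda>c. \<Sum>k<n. a k * (\<Prod>x\<in>UNIV. vs k x (c x)))"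
    by blast
  show "mv (P1 R x) u = (\<lambda>c. 0)"
  proof
    fix c
    define pr where "pr k = (\<Prod>y\<in>UNIV - {x}. vs k y (c y))" for k
    have "slice u c x = (\<lambda>b. \<Sum>k\<in>{..<n}. (\<lambda>k b. (a k * pr k) * vs k x b) k b)"
    proof
      fix b
      have "(\<Prod>y\<in>UNIV. vs k y ((c(x:=b)) y)) = vs k x b * pr k" for k
      proof -
        have "(\<Prod>y\<in>UNIV. vs k y ((c(x:=b)) y)) = vs k x ((c(x:=b)) x) * (\<Prod>y\<in>UNIV - {x}. vs k y ((c(x:=b)) y))"
          by (rule prod.remove) auto
        also have "(\<Prod>y\<in>UNIV - {x}. vs k y ((c(x:=b)) y)) = pr k"
          unfolding pr_def by (rule prod.cong) auto
        finally show ?thesis by simp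
      qed
      thus "slice u c x b = (\<Sum>k\<in>{..<n}. (\<lambda>k b. (a k * pr k) * vs k x b) k b)"
        by (simp add: slice_def u mult.assoc mult.commute mult.left_commute)
    qed
    moreover have "(\<lambda>b. \<Sum>k\<in>{..<n}. (\<lambda>k b. (a k * pr k) * vs k x b) k b) \<in> hs"
      by (rule csub_sum[OF sub]) (use V csub_scale[OF sub] in auto)
    ultimately have "slice u c x \<in> hs" by simp
    thus "mv (P1 R x) u c = 0" using R0 by (simp add: mv_P1)
  qed
qed

definition tau :: "'v set \<Rightarrow> 'v \<Rightarrow> 'v"
  where "tau e = (let p = (SOME p. e = {fst p, snd p} \<and> fst p \<noteq> snd p) in Transposition.transpose (fst p) (snd p))"

lemma tau_eq: assumes "x \<noteq> y" shows "tau {x, y} = Transposition.transpose x y"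
proof -
  let ?P = "\<lambda>p. {x, y} = {fst p, snd p} \<and> fst p \<noteq> snd p"
  have "?P (x, y)" using assms by simp
  hence P: "?P (SOME p. ?P p)" by (rule someI)
  define p where "p = fst (SOME p. ?P p)"
  define q where "q = snd (SOME p. ?P p)"
  have pq: "{x, y} = {p, q}" using P p_def q_def by simp
  hence "(p = x \<and> q = y) \<or> (p = y \<and> q = x)" by (simp add: doubleton_eq_iff) blast
  moreover have "tau {x, y} = Transposition.transpose p q" unfolding tau_def Let_def p_def q_def ..
  ultimately show ?thesis using transpose_commute by metis
qed

definition P2 :: "'v set \<Rightarrow> ('v \<Rightarrow> 'b) \<Rightarrow> ('v \<Rightarrow> 'b) \<Rightarrow> complex"
  where "P2 e c c' = ((if c' = c then 1 else 0) - (if c' = c \<circ> tau e then 1 else 0)) / 2"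

lemma mv_P2: "mv (P2 (e::'v::finite set)) u (c::'v \<Rightarrow> 'b::finite) = (u c - u (c \<circ> tau e)) / (2::complex)"
proof -
  have "mv (P2 e) u c = (\<Sum>c'\<in>UNIV. (if c' = c then u c' / 2 else 0) - (if c' = c \<circ> tau e then u c' / 2 else 0))"
    unfolding mv_def P2_def by (rule sum.cong) auto
  also have "\<dots> = u c / 2 - u (c \<circ> tau e) / 2"
    by (simp only: sum_subtractf sum.delta finite UNIV_I if_True)
  finally show ?thesis by (simp add: diff_divide_distrib)
qed

lemma P2_proj:
  assumes "x \<noteq> y"
  shows "is_orth_proj (P2 {x, y} :: ('v::finite \<Rightarrow> 'b::finite) \<Rightarrow> _)"
  unfolding is_orth_proj_def op_mult_mm
proof (intro conjI allI)
  let ?t = "Transposition.transpose x y"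
  have t: "tau {x, y} = ?t" by (rule tau_eq[OF assms])
  have tt: "(c \<circ> ?t) \<circ> ?t = c" for c :: "'v \<Rightarrow> 'b" by (simp add: comp_assoc)
  show "mm (P2 {x, y}) (P2 {x, y}) = (P2 {x, y} :: ('v::finite \<Rightarrow> 'b::finite) \<Rightarrow> _)"
  proof (rule mv_ext)
    fix u :: "('v \<Rightarrow> 'b) \<Rightarrow> complex"
    show "mv (mm (P2 {x, y}) (P2 {x, y})) u = mv (P2 {x, y}) u"
      by (simp add: mv_mm fun_eq_iff mv_P2 t tt field_simps)
  qed
  fix c c' :: "'v \<Rightarrow> 'b"
  have "(c = c' \<circ> ?t) = (c' = c \<circ> ?t)" using tt by metis
  thus "P2 {x, y} c' c = cnj (P2 {x, y} c c')" unfolding P2_def t by (auto simp: eq_commute)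
qed

lemma P2_local:
  assumes "x \<noteq> y"
  shows "acts_only_on {x, y} (P2 {x, y} :: ('v::finite \<Rightarrow> 'b::finite) \<Rightarrow> _)"
proof -
  let ?t = "Transposition.transpose x y"
  have t: "tau {x, y} = ?t" by (rule tau_eq[OF assms])
  have ct: "(c' = c \<circ> ?t) \<longleftrightarrow> (c' x = c y \<and> c' y = c x \<and> (\<forall>z. z \<notin> {x, y} \<longrightarrow> c' z = c z))" for c c' :: "'v \<Rightarrow> 'b"
    by (auto simp: fun_eq_iff transpose_def)
  have ci: "(c' = c) \<longleftrightarrow> (c' x = c x \<and> c' y = c y \<and> (\<forall>z. z \<notin> {x, y} \<longrightarrow> c' z = c z))" for c c' :: "'v \<Rightarrow> 'b"
    by (auto simp: fun_eq_iff)
  show ?thesis unfolding acts_only_on_def P2_def t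
  proof (intro conjI allI impI)
    fix c c' :: "'v \<Rightarrow> 'b"
    assume "\<exists>z. z \<notin> {x, y} \<and> c z \<noteq> c' z"
    hence "c' \<noteq> c" "c' \<noteq> c \<circ> ?t" unfolding ct ci by auto
    thus "((if c' = c then 1 else 0) - (if c' = c \<circ> ?t then 1 else 0)) / 2 = (0::complex)" by simp
  next
    fix c c' d d' :: "'v \<Rightarrow> 'b"
    assume a: "\<forall>z\<in>{x, y}. c z = d z \<and> c' z = d' z" "\<forall>z. z \<notin> {x, y} \<longrightarrow> c z = c' z"
      "\<forall>z. z \<notin> {x, y} \<longrightarrow> d z = d' z"
    have "(c' = c) = (d' = d)" unfolding ci using a by auto
    moreover have "(c' = c \<circ> ?t) = (d' = d \<circ> ?t)" unfolding ct using a by auto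
    ultimately show "((if c' = c then 1 else 0) - (if c' = c \<circ> ?t then 1 else 0)) / 2 =
      ((if d' = d then 1 else 0) - (if d' = d \<circ> ?t then 1 else 0)) / (2::complex)" by simp
  qed
qed

lemma P2_ann:
  assumes "x \<noteq> y"
  shows "annihilates (P2 {x, y} :: ('v::finite \<Rightarrow> 'b::finite) \<Rightarrow> _) (sym_sub hs)"
  unfolding annihilates_def op_apply_mv
proof (intro ballI ext)
  fix u :: "('v \<Rightarrow> 'b) \<Rightarrow> complex" and c
  let ?t = "Transposition.transpose x y"
  assume "u \<in> sym_sub hs"
  hence "perm_op ?t u = u" by (simp add: sym_sub_def)
  hence "u (c \<circ> ?t) = u c" unfolding perm_op_def by (metis inv_transpose_eq)
  thus "mv (P2 {x, y}) u c = 0" by (simp add: mv_P2 tau_eq[OF assms])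
qed

lemma tensor_expand:
  fixes u :: "('v::finite \<Rightarrow> 'b::finite) \<Rightarrow> complex" and Q :: "'b \<Rightarrow> 'b \<Rightarrow> complex"
  assumes sl: "\<And>c x. mv Q (slice u c x) = slice u c x"
  shows "finite D \<Longrightarrow> u c = (\<Sum>c'\<in>{c'. \<forall>z. z \<notin> D \<longrightarrow> c' z = c z}. (\<Prod>y\<in>D. Q (c y) (c' y)) * u c')"
proof (induction D arbitrary: c rule: finite_induct)
  case empty
  have "{c'. \<forall>z. c' z = c z} = {c}" by (auto simp: fun_eq_iff)
  thus ?case by simp
next
  case (insert x D)
  define S where "S = {c'. \<forall>z. z \<notin> insert x D \<longrightarrow> c' z = c z}"
  define h where "h c' = (\<Prod>y\<in>insert x D. Q (c y) (c' y)) * u c'" for c'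
  have "sum h S = (\<Sum>b\<in>UNIV. sum h {c' \<in> S. c' x = b})"
    by (rule sum.group[symmetric]) auto
  also have "\<dots> = (\<Sum>b\<in>UNIV. Q (c x) b * u (c(x:=b)))"
  proof (rule sum.cong[OF refl])
    fix b
    have Sb: "{c' \<in> S. c' x = b} = {c'. \<forall>z. z \<notin> D \<longrightarrow> c' z = (c(x:=b)) z}"
      unfolding S_def using insert(2) by auto
    have "sum h {c' \<in> S. c' x = b} = (\<Sum>c'\<in>{c'. \<forall>z. z \<notin> D \<longrightarrow> c' z = (c(x:=b)) z}.
             Q (c x) b * ((\<Prod>y\<in>D. Q ((c(x:=b)) y) (c' y)) * u c'))"
      unfolding Sb
    proof (rule sum.cong[OF refl])
      fix c' assume "c' \<in> {c'. \<forall>z. z \<notin> D \<longrightarrow> c' z = (c(x:=b)) z}"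
      hence cx: "c' x = b" using insert(2) by auto
      have "(\<Prod>y\<in>D. Q (c y) (c' y)) = (\<Prod>y\<in>D. Q ((c(x:=b)) y) (c' y))"
        by (rule prod.cong) (use insert(2) in auto)
      thus "h c' = Q (c x) b * ((\<Prod>y\<in>D. Q ((c(x:=b)) y) (c' y)) * u c')"
        unfolding h_def using insert(1,2) cx by (simp add: mult.assoc)
    qed
    also have "\<dots> = Q (c x) b * u (c(x:=b))"
    proof -
      have e: "(\<Sum>c'\<in>{c'. \<forall>z. z \<notin> D \<longrightarrow> c' z = (c(x:=b)) z}. (\<Prod>y\<in>D. Q ((c(x:=b)) y) (c' y)) * u c') = u (c(x:=b))"
        by (rule insert.IH[symmetric])
      show ?thesis by (subst sum_distrib_left[symmetric]) (simp only: e)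
    qed
    finally show "sum h {c' \<in> S. c' x = b} = Q (c x) b * u (c(x:=b))" .
  qed
  also have "\<dots> = mv Q (slice u c x) (c x)" by (simp add: mv_def slice_def)
  also have "\<dots> = u c" unfolding sl by (simp add: slice_def)
  finally show ?case unfolding S_def h_def ..
qed

lemma mvR:
  "mv (\<lambda>a b. (if a = b then 1 else 0) - Q a b) v = v - mv Q (v::'b::finite \<Rightarrow> complex)"
proof
  fix a
  have "(\<Sum>b\<in>UNIV. ((if a = b then 1 else 0) - Q a b) * v b) = (\<Sum>b\<in>UNIV. (if a = b then v b else 0) - Q a b * v b)"
    by (rule sum.cong) (auto simp: left_diff_distrib)
  thus "mv (\<lambda>a b. (if a = b then 1 else 0) - Q a b) v a = (v - mv Q v) a"
    by (simp add: mv_def sum_subtractf)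
qed

lemma trans_inv:
  fixes u :: "('v::finite \<Rightarrow> 'b) \<Rightarrow> complex"
  assumes irrefl: "\<And>x. \<not> E x x" and conn: "connected_graph E"
    and inv: "\<And>x y c. E x y \<Longrightarrow> u (c \<circ> Transposition.transpose x y) = u c"
  shows "u (c \<circ> Transposition.transpose x y) = u c"
proof -
  have "(x, y) \<in> {(a, b). E a b}\<^sup>*" using conn unfolding connected_graph_def by blast
  hence "\<forall>c. u (c \<circ> Transposition.transpose x y) = u c"
  proof (induction rule: rtrancl_induct)
    case base thus ?case by simp
  next
    case (step y z)
    hence Eyz: "E y z" by simp
    show ?case
    proof (cases "x = z")
      case True thus ?thesis by simp
    next
      case xz: False
      show ?thesis
      proof (cases "x = y")
        case True thus ?thesis using inv[OF Eyz] by (simp add: o_def)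
      next
        case xy: False
        have yz: "y \<noteq> z" using irrefl Eyz by metis
        have T: "Transposition.transpose x z = Transposition.transpose x y \<circ> Transposition.transpose y z \<circ> Transposition.transpose x y"
          using transpose_comp_triple[of x z y] xz yz by simp
        show ?thesis
        proof
          fix c
          have "u (c \<circ> Transposition.transpose x z) =
                u (((c \<circ> Transposition.transpose x y) \<circ> Transposition.transpose y z) \<circ> Transposition.transpose x y)"
            by (simp add: T comp_assoc)
          also have "\<dots> = u ((c \<circ> Transposition.transpose x y) \<circ> Transposition.transpose y z)"
            using step.IH by blast
          also have "\<dots> = u (c \<circ> Transposition.transpose x y)" using inv Eyz by blast
          also have "\<dots> = u c" using step.IH by blast
          finally show "u (c \<circ> Transposition.transpose x z) = u c" .
        qed
      qed
    qed
  qed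
  thus ?thesis by blast
qed

lemma perm_inv:
  fixes u :: "('v::finite \<Rightarrow> 'b) \<Rightarrow> complex"
  assumes tr: "\<And>x y c. u (c \<circ> Transposition.transpose x y) = u c"
    and "bij \<sigma>"
  shows "perm_op \<sigma> u = u"
proof -
  have all: "\<forall>c. u (c \<circ> p) = u c" if "p permutes (UNIV :: 'v set)" for p
    using that finite_UNIV
  proof (induction rule: permutes_induct)
    case id thus ?case by simp
  next
    case (swap a b p)
    show ?case
    proof
      fix c
      have "u (c \<circ> (Transposition.transpose a b \<circ> p)) = u ((c \<circ> Transposition.transpose a b) \<circ> p)"
        by (simp add: comp_assoc)
      also have "\<dots> = u (c \<circ> Transposition.transpose a b)" using swap.IH by blast
      also have "\<dots> = u c" by (rule tr)
      finally show "u (c \<circ> (Transposition.transpose a b \<circ> p)) = u c" .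
    qed
  qed
  have "bij (inv \<sigma>)" using assms(2) by (simp add: bij_imp_bij_inv)
  hence "inv \<sigma> permutes (UNIV :: 'v set)" by (intro bij_imp_permutes) auto
  thus ?thesis using all unfolding perm_op_def by (auto simp: fun_eq_iff)
qed

lemma kernel_sym:
  fixes u :: "('v::finite \<Rightarrow> 'b::finite) \<Rightarrow> complex" and Q :: "'b \<Rightarrow> 'b \<Rightarrow> complex"
  assumes Qfix: "\<forall>v\<in>hs. mv Q v = v" and Qin: "\<forall>v. mv Q v \<in> hs"
    and irrefl: "\<And>x. \<not> E x x" and conn: "connected_graph E"
    and k1: "\<forall>x. mv (P1 (\<lambda>a b. (if a = b then 1 else 0) - Q a b) x) u = 0"
    and k2: "\<forall>e\<in>edges E. mv (P2 e) u = 0"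
  shows "u \<in> sym_sub hs"
proof -
  have sl: "mv Q (slice u c x) = slice u c x" for c x
  proof -
    have "mv (\<lambda>a b. (if a = b then 1 else 0) - Q a b) (slice u c x) = 0"
    proof
      fix a
      have "mv (P1 (\<lambda>a b. (if a = b then 1 else 0) - Q a b) x) u (c(x:=a)) = 0" using k1 by simp
      moreover have "slice u (c(x:=a)) x = slice u c x" by (simp add: slice_def)
      ultimately show "mv (\<lambda>a b. (if a = b then 1 else 0) - Q a b) (slice u c x) a = 0 a"
        by (simp add: mv_P1)
    qed
    thus ?thesis unfolding mvR by simp
  qed
  have expn: "u c = (\<Sum>c'\<in>UNIV. (\<Prod>y\<in>UNIV. Q (c y) (c' y)) * u c')" for c
    using tensor_expand[OF sl, of UNIV c] by simp
  have tens: "u \<in> tensor_sub hs"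
  proof -
    let ?M = "UNIV :: ('v \<Rightarrow> 'b) set"
    obtain h where h: "bij_betw h {0..<card ?M} ?M" using ex_bij_betw_nat_finite[of ?M] by auto
    define vs where "vs k y = (\<lambda>a. Q a (h k y))" for k y
    have col: "(\<lambda>a. Q a b) \<in> hs" for b
    proof -
      have "mv Q (dl b) = (\<lambda>a. Q a b)" by (simp add: mv_def dl_def fun_eq_iff if_distrib cong: if_cong)
      thus ?thesis using Qin by metis
    qed
    have U: "u = (\<lambda>c. \<Sum>k<card ?M. u (h k) * (\<Prod>y\<in>UNIV. vs k y (c y)))"
    proof
      fix c
      have "(\<Sum>k<card ?M. u (h k) * (\<Prod>y\<in>UNIV. vs k y (c y)))
          = (\<Sum>k\<in>{0..<card ?M}. (\<lambda>c'. (\<Prod>y\<in>UNIV. Q (c y) (c' y)) * u c') (h k))"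
        by (simp add: vs_def atLeast0LessThan mult.commute)
      also have "\<dots> = (\<Sum>c'\<in>?M. (\<Prod>y\<in>UNIV. Q (c y) (c' y)) * u c')"
        by (rule sum.reindex_bij_betw[OF h])
      finally have eq: "(\<Sum>k<card ?M. u (h k) * (\<Prod>y\<in>UNIV. vs k y (c y))) = (\<Sum>c'\<in>?M. (\<Prod>y\<in>UNIV. Q (c y) (c' y)) * u c')" .
      show "u c = (\<Sum>k<card ?M. u (h k) * (\<Prod>y\<in>UNIV. vs k y (c y)))" by (rule trans[OF expn[of c] eq[symmetric]])
    qed
    have V: "\<forall>k<card ?M. \<forall>x. vs k x \<in> hs" using col by (simp add: vs_def)
    show ?thesis unfolding tensor_sub_def mem_Collect_eq
      by (intro exI[of _ "card ?M"] exI[of _ "\<lambda>k. u (h k)"] exI[of _ vs] conjI V U)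
  qed
  have inv: "u (c \<circ> Transposition.transpose x y) = u c" if "E x y" for x y c
  proof -
    have xy: "x \<noteq> y" using irrefl that by metis
    have "{x, y} \<in> edges E" using that by (auto simp: edges_def)
    hence "mv (P2 {x, y}) u c = 0" using k2 by simp
    thus ?thesis by (simp add: mv_P2 tau_eq[OF xy])
  qed
  have "perm_op \<sigma> u = u" if "bij \<sigma>" for \<sigma>
    using perm_inv[OF trans_inv[OF irrefl conn inv] that] .
  thus ?thesis unfolding sym_sub_def using tens by blast
qed

lemma ip_proj: assumes "is_orth_proj P" shows "ip u (mv P u) = ip (mv P u) (mv P (u::('v::finite \<Rightarrow> 'b::finite) \<Rightarrow> complex))"
proof -
  have h: "herm P" using assms unfolding is_orth_proj_def herm_def by blast
  have "mm P P = P" using assms unfolding is_orth_proj_def op_mult_mm by blast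
  hence "mv P u = mv P (mv P u)" by (metis mv_mm)
  hence "ip u (mv P u) = ip u (mv P (mv P u))" by simp
  also have "\<dots> = ip (mv P u) (mv P u)" by (rule ip_herm[OF h])
  finally show ?thesis .
qed

definition nrm :: "('i \<Rightarrow> complex) \<Rightarrow> real" where "nrm w = (\<Sum>c\<in>UNIV. (cmod (w c))\<^sup>2)"

lemma nrm_nonneg: "nrm w \<ge> 0" unfolding nrm_def by (simp add: sum_nonneg)

lemma nrm_zero: assumes "nrm (w :: 'i::finite \<Rightarrow> complex) = 0" shows "w = 0"
proof
  fix c
  have "\<forall>c\<in>UNIV. (cmod (w c))\<^sup>2 = 0" using assms unfolding nrm_def
    by (subst sum_nonneg_eq_0_iff[symmetric]) auto
  thus "w c = 0 c" by simp
qed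

lemma ip_nrm: "ip (w::'i::finite \<Rightarrow> complex) w = of_real (nrm w)"
  by (simp add: ip_self_real nrm_def)

lemma sum_swap_mult:
  fixes f :: "'a \<Rightarrow> 'i::finite \<Rightarrow> complex"
  shows "(\<Sum>c'\<in>(UNIV::'i::finite set). (\<Sum>x\<in>A. f x c') * g c') = (\<Sum>x\<in>A. \<Sum>c'\<in>UNIV. f x c' * g c')"
  by (simp add: sum_distrib_right) (rule sum.swap)

lemma sum_swap_mult2:
  fixes f :: "'a \<Rightarrow> 'i::finite \<Rightarrow> complex"
  shows "(\<Sum>c'\<in>(UNIV::'i::finite set). g c' * (\<Sum>x\<in>A. f x c')) = (\<Sum>x\<in>A. \<Sum>c'\<in>UNIV. g c' * f x c')"
  by (simp add: sum_distrib_left) (rule sum.swap)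

theorem lemma5p1:
  fixes E :: "'v::finite \<Rightarrow> 'v \<Rightarrow> bool"
    and hs :: "('b::finite \<Rightarrow> complex) set"
    and Op :: "('v \<Rightarrow> 'b) \<Rightarrow> ('v \<Rightarrow> 'b) \<Rightarrow> complex"
  assumes sym: "\<And>x y. E x y \<Longrightarrow> E y x"
    and irrefl: "\<And>x. \<not> E x x"
    and conn: "connected_graph E"
    and sub: "csubspace hs"
    and ann: "annihilates Op (sym_sub hs)"
  shows "\<exists>(o1 :: 'v \<Rightarrow> ('v \<Rightarrow> 'b) \<Rightarrow> ('v \<Rightarrow> 'b) \<Rightarrow> complex) P1
          (o2 :: 'v set \<Rightarrow> ('v \<Rightarrow> 'b) \<Rightarrow> ('v \<Rightarrow> 'b) \<Rightarrow> complex) P2.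
     (\<forall>x. is_orth_proj (P1 x) \<and> acts_only_on {x} (P1 x) \<and> annihilates (P1 x) (sym_sub hs)) \<and>
     (\<forall>e\<in>edges E. is_orth_proj (P2 e) \<and> acts_only_on e (P2 e) \<and> annihilates (P2 e) (sym_sub hs)) \<and>
     Op = (\<lambda>c c'. (\<Sum>x\<in>UNIV. op_mult (o1 x) (P1 x) c c') + (\<Sum>e\<in>edges E. op_mult (o2 e) (P2 e) c c'))"
proof -
  obtain Q :: "'b \<Rightarrow> 'b \<Rightarrow> complex" where Q: "mm Q Q = Q" "herm Q" "\<forall>v\<in>hs. mv Q v = v" "\<forall>v. mv Q v \<in> hs"
    using hs_proj[OF sub] by blast
  define R where "R = (\<lambda>a b. (if a = b then 1 else 0) - Q a b)"
  have mvR': "mv R v = v - mv Q v" for v unfolding R_def by (rule mvR)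
  have QQ: "mv Q (mv Q v) = mv Q v" for v using Q(1) mv_mm by metis
  have RR: "mm R R = R"
  proof (rule mv_ext)
    fix v
    show "mv (mm R R) v = mv R v" by (simp add: mv_mm mvR' mv_diff QQ)
  qed
  have hR: "herm R" unfolding herm_def
  proof (intro allI)
    fix i j
    have "Q j i = cnj (Q i j)" using Q(2) unfolding herm_def by blast
    thus "R j i = cnj (R i j)" unfolding R_def by auto
  qed
  have R0: "\<forall>v\<in>hs. mv R v = 0" using Q(3) by (simp add: mvR')
  define PP1 :: "'v \<Rightarrow> ('v \<Rightarrow> 'b) \<Rightarrow> ('v \<Rightarrow> 'b) \<Rightarrow> complex" where "PP1 = P1 R"
  define PP2 where "PP2 = (P2 :: 'v set \<Rightarrow> ('v \<Rightarrow> 'b) \<Rightarrow> ('v \<Rightarrow> 'b) \<Rightarrow> complex)"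
  have edge: "\<exists>x y. e = {x, y} \<and> x \<noteq> y" if "e \<in> edges E" for e
    using that irrefl unfolding edges_def by blast
  have pr1: "is_orth_proj (PP1 x)" for x unfolding PP1_def by (rule P1_proj[OF RR hR])
  have pr2: "is_orth_proj (PP2 e)" if "e \<in> edges E" for e
    using edge[OF that] P2_proj unfolding PP2_def by blast
  define G where "G = (\<lambda>c c'. (\<Sum>x\<in>UNIV. PP1 x c c') + (\<Sum>e\<in>edges E. PP2 e c c'))"
  have fin: "finite (edges E)" by simp
  have mvG: "mv G u c = (\<Sum>x\<in>UNIV. mv (PP1 x) u c) + (\<Sum>e\<in>edges E. mv (PP2 e) u c)" for u c
    unfolding mv_def G_def by (simp add: distrib_right sum.distrib sum_swap_mult)
  have kerG: "mv Op u = 0" if "mv G u = 0" for u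
  proof -
    have "ip u (mv G u) = (\<Sum>x\<in>UNIV. ip u (mv (PP1 x) u)) + (\<Sum>e\<in>edges E. ip u (mv (PP2 e) u))"
      unfolding ip_def mvG by (simp add: distrib_left sum.distrib sum_swap_mult2)
    also have "\<dots> = of_real ((\<Sum>x\<in>UNIV. nrm (mv (PP1 x) u)) + (\<Sum>e\<in>edges E. nrm (mv (PP2 e) u)))"
      using pr1 pr2 by (simp add: ip_proj ip_nrm)
    finally have eq: "ip u (mv G u) = of_real ((\<Sum>x\<in>UNIV. nrm (mv (PP1 x) u)) + (\<Sum>e\<in>edges E. nrm (mv (PP2 e) u)))" .
    have z: "ip u (mv G u) = 0" using that by (simp add: ip_def)
    have "complex_of_real ((\<Sum>x\<in>UNIV. nrm (mv (PP1 x) u)) + (\<Sum>e\<in>edges E. nrm (mv (PP2 e) u))) = 0"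
      using eq z by metis
    hence "(\<Sum>x\<in>UNIV. nrm (mv (PP1 x) u)) + (\<Sum>e\<in>edges E. nrm (mv (PP2 e) u)) = 0"
      by (simp only: of_real_eq_0_iff)
    moreover have "(\<Sum>x\<in>UNIV. nrm (mv (PP1 x) u)) \<ge> 0" "(\<Sum>e\<in>edges E. nrm (mv (PP2 e) u)) \<ge> 0"
      by (simp_all add: sum_nonneg nrm_nonneg)
    ultimately have s1: "(\<Sum>x\<in>UNIV. nrm (mv (PP1 x) u)) = 0" and s2: "(\<Sum>e\<in>edges E. nrm (mv (PP2 e) u)) = 0"
      by linarith+
    have k1: "\<forall>x. mv (P1 R x) u = 0"
      using s1 nrm_zero nrm_nonneg unfolding PP1_def by (subst (asm) sum_nonneg_eq_0_iff) auto
    have k2: "\<forall>e\<in>edges E. mv (P2 e) u = 0"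
      using s2 nrm_zero nrm_nonneg fin unfolding PP2_def by (subst (asm) sum_nonneg_eq_0_iff) auto
    have "u \<in> sym_sub hs"
      by (rule kernel_sym[OF Q(3,4) irrefl conn k1[unfolded R_def] k2])
    thus ?thesis using ann unfolding annihilates_def op_apply_mv by (simp add: zero_fun_def)
  qed
  obtain X where X: "Op = mm X G" using factor[OF kerG] by blast
  show ?thesis
  proof (rule exI[of _ "\<lambda>_::'v. X"], rule exI[of _ PP1], rule exI[of _ "\<lambda>_::'v set. X"], rule exI[of _ PP2],
      intro conjI allI ballI)
    fix x
    show "is_orth_proj (PP1 x)" by (rule pr1)
    show "acts_only_on {x} (PP1 x)" unfolding PP1_def by (rule P1_local)
    show "annihilates (PP1 x) (sym_sub hs)" unfolding PP1_def by (rule P1_ann[OF sub R0])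
  next
    fix e assume e: "e \<in> edges E"
    then obtain x y where xy: "e = {x, y}" "x \<noteq> y" using edge by blast
    show "is_orth_proj (PP2 e)" by (rule pr2[OF e])
    show "acts_only_on e (PP2 e)" unfolding PP2_def xy by (rule P2_local[OF xy(2)])
    show "annihilates (PP2 e) (sym_sub hs)" unfolding PP2_def xy by (rule P2_ann[OF xy(2)])
  next
    show "Op = (\<lambda>c c'. (\<Sum>x\<in>UNIV. op_mult X (PP1 x) c c') + (\<Sum>e\<in>edges E. op_mult X (PP2 e) c c'))"
      unfolding X op_mult_mm
    proof (intro ext)
      fix c c'
      show "mm X G c c' = (\<Sum>x\<in>UNIV. mm X (PP1 x) c c') + (\<Sum>e\<in>edges E. mm X (PP2 e) c c')"
        unfolding mm_def G_def by (simp add: distrib_left sum.distrib sum_swap_mult2)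
    qed
  qed
qed

end
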